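(* Let $u_0,\dots,u_4$ be complex numbers with $M_i(U)\neq0$ for all $i$, and let $Y\subset\mathbb{P}^4=\mathrm{Proj}\,\mathbb{C}[v_0,\dots,v_4]$ be the quintic $\sum_{i=0}^4M_i(U)v_i^5=0$ (the image of the Fermat quintic under a diagonal rescaling of coordinates). Let $P=[1:1:1:1:1]$, $Q=[u_0:\dots:u_4]$ (both lying on $Y$), and let $\Lambda$ be the plane $\sum_iM_i(U)v_i=0,\ \sum_iM_i(U)u_i^4v_i=0$. For $b=(b_0,\dots,b_5)\in\mathbb{C}^6$ consider the conic $C_b$, the image of $\gamma_b:\mathbb{P}^1\to\mathbb{P}^4$, $\gamma_b([t:s])=[t^2+b_its+u_ib_5^2s^2]_{i=0,\dots,4}$, which passes through $P=\gamma_b([1:0])$ and $Q=\gamma_b([0:1])$, and let $B=[b_0:\dots:b_4]$. Then the condition $C_b\subset\Lambda$ and $C_b\cdot(Y\cap\Lambda)\ge 3P+3Q$ in $\Lambda$ is equivalent to $B\in\Lambda\cap\Gamma_U\cap\Gamma_{\iota(U)}$, where $\Gamma_U$ and $\Gamma_{\iota(U)}$ are the quadrics in $\mathbb{P}^4$ given by $\sum_{i=0}^4M_i(U)v_i^2=0$ and $\sum_{i=0}^4M_i(U)u_i^3v_i^2=0$ respectively.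
   Context: For $U=(u_0,\dots,u_4)$: for each $i$, $e_1(i),e_2(i),e_3(i)$ denote the elementary symmetric polynomials in the four variables $\{u_j\}_{j\neq i}$; $d_i=\prod_{j,k\neq i,\,j>k}(u_j-u_k)$; $n_i=e_2(i)^2-e_1(i)e_3(i)$; $M_i(U)=(-1)^id_in_i$. These satisfy $\sum_iM_i(U)u_i^k=0$ for $k\in\{0,1,4,5\}$. For a plane curve $Z\subset\Lambda$ and a curve $C\subset\Lambda$, $C\cdot Z\ge 3P+3Q$ means the local intersection multiplicities of $C$ and $Z$ at $P$ and at $Q$ are each at least $3$. *)

theory Defs
  imports "HOL-Computational_Algebra.Polynomial"
begin

text \<open>Points of P^4 are represented by coordinate functions nat => complex
  (coordinates 0..4); U = (u_0,...,u_4).\<close>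

definition idx_rest :: "nat \<Rightarrow> nat set" where
  "idx_rest i = {0..<5} - {i}"

definition esym :: "(nat \<Rightarrow> complex) \<Rightarrow> nat \<Rightarrow> nat \<Rightarrow> complex" where
  "esym U i k = (\<Sum>S\<in>{S. S \<subseteq> idx_rest i \<and> card S = k}. \<Prod>j\<in>S. U j)"

definition dM :: "(nat \<Rightarrow> complex) \<Rightarrow> nat \<Rightarrow> complex" where
  "dM U i = (\<Prod>(j,k)\<in>{(j,k). j \<in> idx_rest i \<and> k \<in> idx_rest i \<and> j > k}. U j - U k)"

definition nM :: "(nat \<Rightarrow> complex) \<Rightarrow> nat \<Rightarrow> complex" where
  "nM U i = (esym U i 2)^2 - esym U i 1 * esym U i 3"

definition M :: "(nat \<Rightarrow> complex) \<Rightarrow> nat \<Rightarrow> complex" where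
  "M U i = (-1)^i * dM U i * nM U i"

definition quinticY :: "(nat \<Rightarrow> complex) \<Rightarrow> (nat \<Rightarrow> complex) \<Rightarrow> complex" where
  "quinticY U v = (\<Sum>i<5. M U i * v i ^ 5)"

definition in_Lambda :: "(nat \<Rightarrow> complex) \<Rightarrow> (nat \<Rightarrow> complex) \<Rightarrow> bool" where
  "in_Lambda U v \<longleftrightarrow> (\<Sum>i<5. M U i * v i) = 0 \<and> (\<Sum>i<5. M U i * U i ^ 4 * v i) = 0"

definition in_Gamma_U :: "(nat \<Rightarrow> complex) \<Rightarrow> (nat \<Rightarrow> complex) \<Rightarrow> bool" where
  "in_Gamma_U U v \<longleftrightarrow> (\<Sum>i<5. M U i * v i ^ 2) = 0"

definition in_Gamma_iota :: "(nat \<Rightarrow> complex) \<Rightarrow> (nat \<Rightarrow> complex) \<Rightarrow> bool" where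
  "in_Gamma_iota U v \<longleftrightarrow> (\<Sum>i<5. M U i * U i ^ 3 * v i ^ 2) = 0"

definition gamma :: "(nat \<Rightarrow> complex) \<Rightarrow> (nat \<Rightarrow> complex) \<Rightarrow> complex \<Rightarrow> complex \<Rightarrow> nat \<Rightarrow> complex" where
  "gamma U b t s i = t^2 + b i * t * s + U i * (b 5)^2 * s^2"

text \<open>Coordinates of gamma_b as univariate polynomials in the affine charts of P^1
  around [1:0] (parameter s, t = 1) and around [0:1] (parameter t, s = 1).\<close>
definition gamma_chart_P :: "(nat \<Rightarrow> complex) \<Rightarrow> (nat \<Rightarrow> complex) \<Rightarrow> nat \<Rightarrow> complex poly" where
  "gamma_chart_P U b i = [:1, b i, U i * (b 5)^2:]"

definition gamma_chart_Q :: "(nat \<Rightarrow> complex) \<Rightarrow> (nat \<Rightarrow> complex) \<Rightarrow> nat \<Rightarrow> complex poly" where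
  "gamma_chart_Q U b i = [:U i * (b 5)^2, b i, 1:]"

definition pullback_Y :: "(nat \<Rightarrow> complex) \<Rightarrow> (nat \<Rightarrow> complex poly) \<Rightarrow> complex poly" where
  "pullback_Y U g = (\<Sum>i<5. smult (M U i) (g i ^ 5))"

text \<open>Local intersection multiplicity of the parametrised curve with Y \<inter> Lambda at the
  point with parameter 0 is at least k: the pulled back equation vanishes to order
  \<ge> k at 0 (including the case that it vanishes identically, i.e. infinite multiplicity).\<close>
definition int_mult_ge :: "(nat \<Rightarrow> complex) \<Rightarrow> (nat \<Rightarrow> complex poly) \<Rightarrow> nat \<Rightarrow> bool" where
  "int_mult_ge U g k \<longleftrightarrow> monom 1 k dvd pullback_Y U g"

end

theory Submission
  imports Defs
begin

definition D4 :: "complex \<Rightarrow> complex \<Rightarrow> complex \<Rightarrow> complex \<Rightarrow> complex" where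
 "D4 p q r s = (q-p)*(r-p)*(s-p)*(r-q)*(s-q)*(s-r)"
definition N4 :: "complex \<Rightarrow> complex \<Rightarrow> complex \<Rightarrow> complex \<Rightarrow> complex" where
 "N4 p q r s = (p*q+p*r+p*s+q*r+q*s+r*s)^2 - (p+q+r+s)*(p*q*r+p*q*s+p*r*s+q*r*s)"

definition E :: "(nat \<Rightarrow> complex) \<Rightarrow> nat set \<Rightarrow> nat \<Rightarrow> complex" where
  "E f A k = (\<Sum>S\<in>{S. S \<subseteq> A \<and> card S = k}. \<Prod>j\<in>S. f j)"

lemma E_0: "finite A \<Longrightarrow> E f A 0 = 1"
proof -
  assume "finite A"
  then have "{S. S \<subseteq> A \<and> card S = 0} = {{}}"
    using finite_subset by (auto simp: card_eq_0_iff)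
  then show ?thesis by (simp add: E_def)
qed

lemma E_empty: "E f {} (Suc k) = 0"
proof -
  have "{S. S \<subseteq> {} \<and> card S = Suc k} = {}" by auto
  then show ?thesis by (simp add: E_def)
qed

lemma E_insert:
  assumes fA: "finite A" and xA: "x \<notin> A"
  shows "E f (insert x A) (Suc k) = E f A (Suc k) + f x * E f A k"
proof -
  have seteq: "{S. S \<subseteq> insert x A \<and> card S = Suc k} =
     {S. S \<subseteq> A \<and> card S = Suc k} \<union> insert x ` {S. S \<subseteq> A \<and> card S = k}"
  proof (rule set_eqI, rule iffI)
    fix S assume "S \<in> {S. S \<subseteq> insert x A \<and> card S = Suc k}"
    then have S: "S \<subseteq> insert x A" "card S = Suc k" by auto
    have fS: "finite S" using S(1) fA finite_subset by blast
    show "S \<in> {S. S \<subseteq> A \<and> card S = Suc k} \<union> insert x ` {S. S \<subseteq> A \<and> card S = k}"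
    proof (cases "x \<in> S")
      case True
      then have "S = insert x (S - {x})" by auto
      moreover have "S - {x} \<subseteq> A" using S(1) by auto
      moreover have "card (S - {x}) = k" using S(2) True fS by simp
      ultimately show ?thesis by blast
    next
      case False
      then show ?thesis using S by auto
    qed
  next
    fix S assume "S \<in> {S. S \<subseteq> A \<and> card S = Suc k} \<union> insert x ` {S. S \<subseteq> A \<and> card S = k}"
    then show "S \<in> {S. S \<subseteq> insert x A \<and> card S = Suc k}"
    proof
      assume "S \<in> {S. S \<subseteq> A \<and> card S = Suc k}" then show ?thesis by auto
    next
      assume "S \<in> insert x ` {S. S \<subseteq> A \<and> card S = k}"
      then obtain T where T: "T \<subseteq> A" "card T = k" "S = insert x T" by auto
      have "finite T" using T(1) fA finite_subset by blast
      moreover have "x \<notin> T" using T(1) xA by auto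
      ultimately show ?thesis using T by auto
    qed
  qed
  have fin1: "finite {S. S \<subseteq> A \<and> card S = Suc k}" using fA by simp
  have fin2: "finite (insert x ` {S. S \<subseteq> A \<and> card S = k})" using fA by simp
  have disj: "{S. S \<subseteq> A \<and> card S = Suc k} \<inter> insert x ` {S. S \<subseteq> A \<and> card S = k} = {}"
    using xA by auto
  have inj: "inj_on (insert x) {S. S \<subseteq> A \<and> card S = k}"
  proof (rule inj_onI)
    fix X Y assume "X \<in> {S. S \<subseteq> A \<and> card S = k}" "Y \<in> {S. S \<subseteq> A \<and> card S = k}" "insert x X = insert x Y"
    then show "X = Y" using xA by (metis (no_types, lifting) insert_ident mem_Collect_eq subsetD)
  qed
  have "E f (insert x A) (Suc k) = E f A (Suc k) + (\<Sum>S\<in>insert x ` {S. S \<subseteq> A \<and> card S = k}. \<Prod>j\<in>S. f j)"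
    unfolding E_def seteq by (rule sum.union_disjoint[OF fin1 fin2 disj])
  also have "(\<Sum>S\<in>insert x ` {S. S \<subseteq> A \<and> card S = k}. \<Prod>j\<in>S. f j)
      = (\<Sum>T\<in>{S. S \<subseteq> A \<and> card S = k}. \<Prod>j\<in>insert x T. f j)"
    by (rule sum.reindex[OF inj, unfolded comp_def])
  also have "\<dots> = (\<Sum>T\<in>{S. S \<subseteq> A \<and> card S = k}. f x * (\<Prod>j\<in>T. f j))"
  proof (rule sum.cong[OF refl])
    fix T assume "T \<in> {S. S \<subseteq> A \<and> card S = k}"
    then have "T \<subseteq> A" by auto
    then have "finite T" "x \<notin> T" using fA xA finite_subset by auto
    then show "(\<Prod>j\<in>insert x T. f j) = f x * (\<Prod>j\<in>T. f j)" by simp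
  qed
  also have "\<dots> = f x * E f A k" by (simp add: E_def sum_distrib_left)
  finally show ?thesis .
qed

lemma E4:
  assumes "distinct [p,q,r,s]"
  shows "E f {p,q,r,s} 1 = f p + f q + f r + f s"
    "E f {p,q,r,s} 2 = f p*f q+f p*f r+f p*f s+f q*f r+f q*f s+f r*f s"
    "E f {p,q,r,s} 3 = f p*f q*f r+f p*f q*f s+f p*f r*f s+f q*f r*f s"
  using assms by (simp_all add: E_insert E_0 E_empty numeral_eq_Suc algebra_simps)

lemma sum5: "(\<Sum>i<(5::nat). f i) = f 0 + f 1 + f 2 + f 3 + (f 4 :: complex)"
  by (simp add: numeral_eq_Suc)

lemma M4:
  assumes R: "idx_rest i = {p,q,r,s}" and o: "p<q" "q<r" "r<s"
  shows "M U i = (-1)^i * D4 (U p) (U q) (U r) (U s) * N4 (U p) (U q) (U r) (U s)"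
proof -
  have d: "distinct [p,q,r,s]" using o by auto
  have pe: "{(j,k). j \<in> idx_rest i \<and> k \<in> idx_rest i \<and> j > k} = {(q,p),(r,p),(s,p),(r,q),(s,q),(s,r)}"
    unfolding R using o by auto
  have "dM U i = D4 (U p) (U q) (U r) (U s)"
    unfolding dM_def pe D4_def using o by (simp add: algebra_simps)
  moreover have "nM U i = N4 (U p) (U q) (U r) (U s)"
    unfolding nM_def N4_def esym_def R using E4[OF d, of U] by (simp add: E_def)
  ultimately show ?thesis by (simp add: M_def)
qed

lemma Mvals:
  "M U 0 = D4 (U 1) (U 2) (U 3) (U 4) * N4 (U 1) (U 2) (U 3) (U 4)"
  "M U 1 = - D4 (U 0) (U 2) (U 3) (U 4) * N4 (U 0) (U 2) (U 3) (U 4)"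
  "M U 2 = D4 (U 0) (U 1) (U 3) (U 4) * N4 (U 0) (U 1) (U 3) (U 4)"
  "M U 3 = - D4 (U 0) (U 1) (U 2) (U 4) * N4 (U 0) (U 1) (U 2) (U 4)"
  "M U 4 = D4 (U 0) (U 1) (U 2) (U 3) * N4 (U 0) (U 1) (U 2) (U 3)"
proof -
  have "idx_rest 0 = {1,2,3,4}" by (auto simp: idx_rest_def)
  from M4[OF this] show "M U 0 = D4 (U 1) (U 2) (U 3) (U 4) * N4 (U 1) (U 2) (U 3) (U 4)" by simp
  have "idx_rest 1 = {0,2,3,4}" by (auto simp: idx_rest_def)
  from M4[OF this] show "M U 1 = - D4 (U 0) (U 2) (U 3) (U 4) * N4 (U 0) (U 2) (U 3) (U 4)" by simp
  have "idx_rest 2 = {0,1,3,4}" by (auto simp: idx_rest_def)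
  from M4[OF this] show "M U 2 = D4 (U 0) (U 1) (U 3) (U 4) * N4 (U 0) (U 1) (U 3) (U 4)" by simp
  have "idx_rest 3 = {0,1,2,4}" by (auto simp: idx_rest_def)
  from M4[OF this] show "M U 3 = - D4 (U 0) (U 1) (U 2) (U 4) * N4 (U 0) (U 1) (U 2) (U 4)" by simp
  have "idx_rest 4 = {0,1,2,3}" by (auto simp: idx_rest_def)
  from M4[OF this] show "M U 4 = D4 (U 0) (U 1) (U 2) (U 3) * N4 (U 0) (U 1) (U 2) (U 3)" by simp
qed

lemma Mid0: "(\<Sum>i<5. M U i) = 0"
  unfolding sum5 Mvals D4_def N4_def by algebra
lemma Mid1: "(\<Sum>i<5. M U i * U i) = 0"
  unfolding sum5 Mvals D4_def N4_def by algebra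
lemma Mid4: "(\<Sum>i<5. M U i * U i ^ 4) = 0"
  unfolding sum5 Mvals D4_def N4_def by algebra
lemma Mid5: "(\<Sum>i<5. M U i * U i ^ 5) = 0"
  unfolding sum5 Mvals D4_def N4_def by algebra

lemma coeff5:
  fixes x0 x1 x2 :: complex
  shows "coeff ([:x0,x1,x2:]^5) 0 = x0^5"
    "coeff ([:x0,x1,x2:]^5) 1 = 5*x0^4*x1"
    "coeff ([:x0,x1,x2:]^5) 2 = 5*x0^4*x2 + 10*x0^3*x1^2"
  by (simp_all add: coeff_mult numeral_eq_Suc atMost_Suc power_Suc algebra_simps)

lemma coeff_pb: "coeff (pullback_Y U g) k = (\<Sum>i<5. M U i * coeff (g i ^ 5) k)"
  by (simp add: pullback_Y_def coeff_sum)

theorem mainTheorem4: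
  fixes U :: "nat \<Rightarrow> complex" and b :: "nat \<Rightarrow> complex"
  assumes hM: "\<forall>i<5. M U i \<noteq> 0"
    and hb5: "b 5 \<noteq> 0"
  shows "((\<forall>t s. in_Lambda U (gamma U b t s))
            \<and> int_mult_ge U (gamma_chart_P U b) 3
            \<and> int_mult_ge U (gamma_chart_Q U b) 3)
         \<longleftrightarrow> (in_Lambda U b \<and> in_Gamma_U U b \<and> in_Gamma_iota U b)"
proof -
  define c where "c = b 5 ^ 2"
  have c0: "c \<noteq> 0" using hb5 by (simp add: c_def)
  define S1 where "S1 = (\<Sum>i<5. M U i * b i)"
  define S4 where "S4 = (\<Sum>i<5. M U i * U i ^ 4 * b i)"
  define T2 where "T2 = (\<Sum>i<5. M U i * b i ^ 2)"
  define T3 where "T3 = (\<Sum>i<5. M U i * U i ^ 3 * b i ^ 2)"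
  have g1: "(\<Sum>i<5. M U i * gamma U b t s i) = t^2 * (\<Sum>i<5. M U i) + t*s*S1 + c*s^2*(\<Sum>i<5. M U i * U i)" for t s
    unfolding sum5 gamma_def S1_def c_def by algebra
  have g2: "(\<Sum>i<5. M U i * U i ^ 4 * gamma U b t s i) = t^2 * (\<Sum>i<5. M U i * U i ^ 4) + t*s*S4 + c*s^2*(\<Sum>i<5. M U i * U i ^ 5)" for t s
    unfolding sum5 gamma_def S4_def c_def by algebra
  have lam: "in_Lambda U (gamma U b t s) \<longleftrightarrow> t*s*S1 = 0 \<and> t*s*S4 = 0" for t s
    unfolding in_Lambda_def g1 g2 Mid0 Mid1 Mid4 Mid5 by simp
  have lamb: "in_Lambda U b \<longleftrightarrow> S1 = 0 \<and> S4 = 0"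
    unfolding in_Lambda_def S1_def S4_def by simp
  have P0: "coeff (pullback_Y U (gamma_chart_P U b)) 0 = (\<Sum>i<5. M U i)"
    unfolding coeff_pb gamma_chart_P_def coeff5 by simp
  have P1: "coeff (pullback_Y U (gamma_chart_P U b)) 1 = 5 * S1"
    unfolding coeff_pb gamma_chart_P_def coeff5 S1_def sum5 by (simp add: algebra_simps)
  have P2: "coeff (pullback_Y U (gamma_chart_P U b)) 2 = 10 * T2 + 5 * c * (\<Sum>i<5. M U i * U i)"
    unfolding coeff_pb gamma_chart_P_def coeff5 T2_def c_def sum5 by (simp add: algebra_simps)
  have Q0: "coeff (pullback_Y U (gamma_chart_Q U b)) 0 = c^5 * (\<Sum>i<5. M U i * U i ^ 5)"
    unfolding coeff_pb gamma_chart_Q_def coeff5 c_def sum5 by algebra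
  have Q1: "coeff (pullback_Y U (gamma_chart_Q U b)) 1 = 5 * c^4 * S4"
    unfolding coeff_pb gamma_chart_Q_def coeff5 S4_def c_def sum5 by algebra
  have Q2: "coeff (pullback_Y U (gamma_chart_Q U b)) 2 = 10 * c^3 * T3 + 5 * c^4 * (\<Sum>i<5. M U i * U i ^ 4)"
    unfolding coeff_pb gamma_chart_Q_def coeff5 T3_def c_def sum5 by algebra
  have three: "(\<forall>k<(3::nat). f k = 0) \<longleftrightarrow> f 0 = 0 \<and> f 1 = 0 \<and> f 2 = (0::complex)" for f
    by (auto simp: numeral_3_eq_3 numeral_2_eq_2 less_Suc_eq)
  have mP: "int_mult_ge U (gamma_chart_P U b) 3 \<longleftrightarrow> S1 = 0 \<and> T2 = 0"
    unfolding int_mult_ge_def monom_1_dvd_iff' three P0 P1 P2 Mid0 Mid1 by simp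
  have mQ: "int_mult_ge U (gamma_chart_Q U b) 3 \<longleftrightarrow> S4 = 0 \<and> T3 = 0"
    unfolding int_mult_ge_def monom_1_dvd_iff' three Q0 Q1 Q2 Mid4 Mid5 using c0 by simp
  have allL: "(\<forall>t s. in_Lambda U (gamma U b t s)) \<longleftrightarrow> S1 = 0 \<and> S4 = 0"
  proof
    assume "\<forall>t s. in_Lambda U (gamma U b t s)"
    then have "in_Lambda U (gamma U b 1 1)" by blast
    then show "S1 = 0 \<and> S4 = 0" using lam by simp
  next
    assume "S1 = 0 \<and> S4 = 0"
    then show "\<forall>t s. in_Lambda U (gamma U b t s)" using lam by simp
  qed
  show ?thesis
    unfolding allL mP mQ lamb in_Gamma_U_def in_Gamma_iota_def T2_def[symmetric] T3_def[symmetric]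
    by blast
qed

end
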